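(* Let $M\ge1$ be an integer, let $\lambda,\omega,T>0$, $\alpha,\beta\ge0$, and let $f_0\ge f^*$ be reals. For $\rho\in[0,1)$ satisfying $\lambda<\frac{1-\sqrt\rho}{6\sqrt M\,\omega}$ define $$G(\rho)=\frac{M\lambda^2\omega^2}{(1-\sqrt\rho)^2-18M\lambda^2\omega^2},\qquad B(\rho)=\frac{1}{\tfrac12-9G(\rho)}\left(\frac{f_0-f^*}{\lambda T}+\frac{\lambda\omega\alpha^2}{2M}+\alpha^2G(\rho)+9\beta^2G(\rho)\right).$$ Then $B$ is a monotonically increasing function of $\rho$ on this domain.
   Context: $B(\rho)$ is the right-hand side of the paper's ergodic convergence bound for decentralized federated learning, with $\rho=\rho(\overline{\mathbf W^2})=\max\{\lambda_2(\overline{\mathbf W^2}),-\lambda_M(\overline{\mathbf W^2})\}$, the second-largest-in-magnitude eigenvalue of the expected squared mixing matrix; $M$ is the number of devices, $\lambda$ the learning rate, $\omega$ the gradient Lipschitz constant, $\alpha^2,\beta^2$ variance bounds, $T$ the number of rounds, $f_0$ the initial and $f^*$ the optimal loss value. *)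

theory Defs
  imports Complex_Main
begin

definition G_fun :: "nat \<Rightarrow> real \<Rightarrow> real \<Rightarrow> real \<Rightarrow> real" where
  "G_fun M lam \<omega> \<rho> =
     (real M * lam\<^sup>2 * \<omega>\<^sup>2) / ((1 - sqrt \<rho>)\<^sup>2 - 18 * real M * lam\<^sup>2 * \<omega>\<^sup>2)"

definition B_fun :: "nat \<Rightarrow> real \<Rightarrow> real \<Rightarrow> real \<Rightarrow> real \<Rightarrow> real \<Rightarrow> real \<Rightarrow> real \<Rightarrow> real \<Rightarrow> real" where
  "B_fun M lam \<omega> \<alpha> \<beta> T f0 fstar \<rho> =
     (1 / (1/2 - 9 * G_fun M lam \<omega> \<rho>)) *
     ((f0 - fstar) / (lam * T) + lam * \<omega> * \<alpha>\<^sup>2 / (2 * real M)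
      + \<alpha>\<^sup>2 * G_fun M lam \<omega> \<rho> + 9 * \<beta>\<^sup>2 * G_fun M lam \<omega> \<rho>)"

definition B_domain :: "nat \<Rightarrow> real \<Rightarrow> real \<Rightarrow> real set" where
  "B_domain M lam \<omega> = {\<rho>. 0 \<le> \<rho> \<and> \<rho> < 1 \<and> lam < (1 - sqrt \<rho>) / (6 * sqrt (real M) * \<omega>)}"

end

theory Submission
  imports Defs
begin

lemma dom_bound:
  fixes M :: nat and lam \<omega> \<rho> :: real
  assumes "M \<ge> 1" "lam > 0" "\<omega> > 0" "\<rho> \<in> B_domain M lam \<omega>"
  shows "(1 - sqrt \<rho>)\<^sup>2 > 36 * (real M * lam\<^sup>2 * \<omega>\<^sup>2)"
proof -
  have r: "0 \<le> \<rho>" "\<rho> < 1" "lam < (1 - sqrt \<rho>) / (6 * sqrt (real M) * \<omega>)"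
    using assms(4) by (auto simp: B_domain_def)
  have sM: "sqrt (real M) > 0" using assms(1) by simp
  have p: "6 * sqrt (real M) * \<omega> > 0" using sM assms(3) by simp
  have a: "lam * (6 * sqrt (real M) * \<omega>) < 1 - sqrt \<rho>"
    using r(3) p by (simp add: pos_less_divide_eq)
  have b: "0 \<le> lam * (6 * sqrt (real M) * \<omega>)" using p assms(2) by simp
  have "(lam * (6 * sqrt (real M) * \<omega>))\<^sup>2 < (1 - sqrt \<rho>)\<^sup>2"
    using a b by (simp add: power_strict_mono)
  moreover have "(lam * (6 * sqrt (real M) * \<omega>))\<^sup>2 = 36 * (real M * lam\<^sup>2 * \<omega>\<^sup>2)"
    by (simp add: power_mult_distrib)
  ultimately show ?thesis by simp
qed

lemma frac_mono:
  fixes K a g1 g2 :: real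
  assumes "K \<ge> 0" "a \<ge> 0" "0 \<le> g1" "g1 \<le> g2" "g2 < 1/18"
  shows "(1 / (1/2 - 9 * g1)) * (K + a * g1) \<le> (1 / (1/2 - 9 * g2)) * (K + a * g2)"
proof -
  have p1: "1/2 - 9 * g1 > 0" "1/2 - 9 * g2 > 0" using assms by auto
  have "(K + a * g1) * (1/2 - 9 * g2) \<le> (K + a * g2) * (1/2 - 9 * g1)"
  proof -
    have "(K + a * g2) * (1/2 - 9 * g1) - (K + a * g1) * (1/2 - 9 * g2)
          = (g2 - g1) * (9 * K + a / 2)" by (simp add: algebra_simps add_divide_distrib diff_divide_distrib)
    also have "\<dots> \<ge> 0" using assms by simp
    finally show ?thesis by simp
  qed
  thus ?thesis using p1 by (simp add: divide_simps algebra_simps)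
qed

theorem proposition1:
  fixes M :: nat and lam \<omega> T \<alpha> \<beta> f0 fstar :: real
  assumes "M \<ge> 1" and "lam > 0" and "\<omega> > 0" and "T > 0"
    and "\<alpha> \<ge> 0" and "\<beta> \<ge> 0" and "f0 \<ge> fstar"
  shows "mono_on (B_domain M lam \<omega>) (B_fun M lam \<omega> \<alpha> \<beta> T f0 fstar)"
proof (rule mono_onI)
  fix x y assume x: "x \<in> B_domain M lam \<omega>" and y: "y \<in> B_domain M lam \<omega>" and xy: "x \<le> y"
  define c where "c = real M * lam\<^sup>2 * \<omega>\<^sup>2"
  have c0: "c > 0" using assms unfolding c_def by simp
  have dx: "(1 - sqrt x)\<^sup>2 > 36 * c" using dom_bound[OF assms(1-3) x] c_def by simp
  have dy: "(1 - sqrt y)\<^sup>2 > 36 * c" using dom_bound[OF assms(1-3) y] c_def by simp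
  have y1: "y < 1" using y by (simp add: B_domain_def)
  have x0: "0 \<le> x" using x by (simp add: B_domain_def)
  have s1: "sqrt x \<le> sqrt y" using xy by simp
  have s2: "sqrt y < 1" using y1 x0 xy by simp
  have s0: "0 \<le> sqrt x" using x0 by simp
  have D: "(1 - sqrt y)\<^sup>2 \<le> (1 - sqrt x)\<^sup>2"
    using s1 s2 by (intro power_mono) auto
  have Gx: "G_fun M lam \<omega> x = c / ((1 - sqrt x)\<^sup>2 - 18 * c)"
    unfolding G_fun_def c_def by (simp add: mult.assoc)
  have Gy: "G_fun M lam \<omega> y = c / ((1 - sqrt y)\<^sup>2 - 18 * c)"
    unfolding G_fun_def c_def by (simp add: mult.assoc)
  have g0: "0 \<le> G_fun M lam \<omega> x" using Gx c0 dx by simp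
  have gle: "G_fun M lam \<omega> x \<le> G_fun M lam \<omega> y"
    unfolding Gx Gy using c0 dx dy D by (intro divide_left_mono) auto
  have glt: "G_fun M lam \<omega> y < 1/18"
    unfolding Gy using c0 dy by (simp add: divide_simps)
  have K: "(f0 - fstar) / (lam * T) + lam * \<omega> * \<alpha>\<^sup>2 / (2 * real M) \<ge> 0"
    using assms by simp
  have a: "\<alpha>\<^sup>2 + 9 * \<beta>\<^sup>2 \<ge> 0" by simp
  have eq: "B_fun M lam \<omega> \<alpha> \<beta> T f0 fstar r =
     (1 / (1/2 - 9 * G_fun M lam \<omega> r)) *
     (((f0 - fstar) / (lam * T) + lam * \<omega> * \<alpha>\<^sup>2 / (2 * real M)) + (\<alpha>\<^sup>2 + 9 * \<beta>\<^sup>2) * G_fun M lam \<omega> r)" for r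
    unfolding B_fun_def by (simp add: algebra_simps)
  show "B_fun M lam \<omega> \<alpha> \<beta> T f0 fstar x \<le> B_fun M lam \<omega> \<alpha> \<beta> T f0 fstar y"
    unfolding eq by (rule frac_mono[OF K a g0 gle glt])
qed

end
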